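(* Let $K_c=\operatorname{conv}\big(\mathbb{S}^{d-1}\cup\{\boldsymbol v_i\mid i\in I\}\big)\subset\mathbb{E}^d$ be a cap body and let $i\in I$. A direction $\boldsymbol u\in\mathbb{S}^{d-1}$ illuminates the vertex $\boldsymbol v_i$ of $K_c$ if and only if $\langle\boldsymbol v_i,\boldsymbol u\rangle<-\sqrt{\|\boldsymbol v_i\|^2-1}$.
   Context: $\mathbb{S}^{d-1}$ is the unit sphere centred at the origin and $B^d$ the closed unit ball. A cap body is $\operatorname{conv}(\mathbb{S}^{d-1}\cup\{\boldsymbol v_i\mid i\in I\})$ where $\{\boldsymbol v_i\}$ is a countable subset of $\mathbb{E}^d\setminus B^d$ such that for distinct $i,j$ the segment $\overline{\boldsymbol v_i\boldsymbol v_j}$ intersects $B^d$; the points $\boldsymbol v_i$ are its vertices. A direction $\boldsymbol u\in\mathbb{S}^{d-1}$ illuminates a boundary point $\boldsymbol p$ of a convex body $K$ if $\boldsymbol p+\lambda\boldsymbol u$ is in the interior of $K$ for some $\lambda>0$. *)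

theory Defs
  imports "HOL-Analysis.Analysis"
begin

definition cap_vertices :: "'a::euclidean_space set \<Rightarrow> bool" where
  "cap_vertices V \<longleftrightarrow> countable V \<and> V \<inter> cball 0 1 = {} \<and>
     (\<forall>v\<in>V. \<forall>w\<in>V. v \<noteq> w \<longrightarrow> closed_segment v w \<inter> cball 0 1 \<noteq> {})"

definition cap_body :: "'a::euclidean_space set \<Rightarrow> 'a set" where
  "cap_body V = convex hull (sphere 0 1 \<union> V)"

definition illuminates :: "'a::euclidean_space set \<Rightarrow> 'a \<Rightarrow> 'a \<Rightarrow> bool" where
  "illuminates K u p \<longleftrightarrow> p \<in> frontier K \<and> (\<exists>t>0. p + t *\<^sub>R u \<in> interior K)"

end

theory Submission
  imports Defs
begin

lemma cball_sub_hull: "cball (0::'a::euclidean_space) 1 \<subseteq> convex hull (sphere 0 1)"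
proof -
  have "cball (0::'a) 1 = convex hull (frontier (cball 0 1))"
    by (rule Krein_Milman_frontier[OF convex_cball compact_cball])
  also have "frontier (cball (0::'a) 1) = sphere 0 1" using frontier_cball[where e=1 and a=0] by simp
  finally show ?thesis by simp
qed

lemma interior_halfspace_strict:
  fixes K :: "'a::euclidean_space set"
  assumes "K \<subseteq> {x. x \<bullet> n \<le> c}" "n \<noteq> 0" "q \<in> interior K"
  shows "q \<bullet> n < c"
proof -
  obtain e where e: "e > 0" "ball q e \<subseteq> K" using assms(3) by (meson mem_interior)
  let ?y = "q + (e/2 / norm n) *\<^sub>R n"
  have "dist q ?y < e" using e assms(2) by (simp add: dist_norm)
  hence "?y \<in> K" using e by auto
  hence "?y \<bullet> n \<le> c" using assms(1) by auto
  moreover have "?y \<bullet> n = q \<bullet> n + (e/2 / norm n) * (n \<bullet> n)" by (simp add: inner_add_left)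
  moreover have "(e/2 / norm n) * (n \<bullet> n) > 0" using e assms(2) by simp
  ultimately show ?thesis by linarith
qed

lemma halfspace_contains:
  fixes V :: "'a::euclidean_space set"
  assumes cv: "cap_vertices V" and vV: "v \<in> V" and nn: "norm n \<le> v \<bullet> n"
  shows "cap_body V \<subseteq> {x. x \<bullet> n \<le> v \<bullet> n}"
  unfolding cap_body_def
proof (rule hull_minimal)
  show "convex {x. x \<bullet> n \<le> v \<bullet> n}" using convex_halfspace_le[of n "v \<bullet> n"] by (simp add: inner_commute)
  show "sphere 0 1 \<union> V \<subseteq> {x. x \<bullet> n \<le> v \<bullet> n}"
  proof
    fix x assume x: "x \<in> sphere 0 1 \<union> V"
    show "x \<in> {x. x \<bullet> n \<le> v \<bullet> n}"
    proof (cases "x \<in> sphere 0 1")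
      case True
      have "x \<bullet> n \<le> norm x * norm n" by (rule norm_cauchy_schwarz)
      thus ?thesis using True nn by simp
    next
      case False
      hence xV: "x \<in> V" using x by auto
      show ?thesis
      proof (cases "x = v")
        case True thus ?thesis by simp
      next
        case False
        have allseg: "\<forall>v\<in>V. \<forall>w\<in>V. v \<noteq> w \<longrightarrow> closed_segment v w \<inter> cball 0 1 \<noteq> {}"
          using cv unfolding cap_vertices_def by (rule conjunct2[OF conjunct2])
        have "closed_segment v x \<inter> cball 0 1 \<noteq> {}"
          using allseg xV vV False by (metis (no_types))
        then obtain b where b: "b \<in> closed_segment v x" "b \<in> cball 0 1" by blast
        obtain r where r: "0 \<le> r" "r \<le> 1" "b = (1 - r) *\<^sub>R v + r *\<^sub>R x"
          using b(1) unfolding in_segment(1) by blast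
        have "V \<inter> cball 0 1 = {}" using cv unfolding cap_vertices_def by (rule conjunct1[OF conjunct2])
        hence vnot: "v \<notin> cball 0 1" using vV by blast
        have "r \<noteq> 0"
        proof
          assume "r = 0"
          hence "b = v" using r(3) by simp
          thus False using vnot b(2) by simp
        qed
        hence rp: "r > 0" using r by simp
        have "b \<bullet> n \<le> norm b * norm n" by (rule norm_cauchy_schwarz)
        also have "\<dots> \<le> norm n" using b(2) by (simp add: mult_left_le_one_le)
        finally have "b \<bullet> n \<le> v \<bullet> n" using nn by simp
        moreover have "b \<bullet> n = v \<bullet> n + r * ((x - v) \<bullet> n)"
          unfolding r(3) by (simp add: inner_add_left inner_diff_left algebra_simps)
        ultimately have "r * ((x - v) \<bullet> n) \<le> 0" by linarith
        hence "(x - v) \<bullet> n \<le> 0" using rp by (simp add: mult_le_0_iff)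
        thus ?thesis by (simp add: inner_diff_left)
      qed
    qed
  qed
qed

theorem lemma1:
  fixes V :: "'a::euclidean_space set" and v u :: 'a
  assumes "cap_vertices V" and "v \<in> V" and "u \<in> sphere 0 1"
  shows "illuminates (cap_body V) u v \<longleftrightarrow> v \<bullet> u < - sqrt ((norm v)\<^sup>2 - 1)"
proof -
  let ?K = "cap_body V"
  let ?a = "norm v" and ?p = "v \<bullet> u"
  have "V \<inter> cball 0 1 = {}" using assms(1) unfolding cap_vertices_def by (rule conjunct1[OF conjunct2])
  hence "v \<notin> cball 0 1" using assms(2) by blast
  hence a1: "?a > 1" by simp
  have nu: "norm u = 1" using assms(3) by simp
  have uu: "u \<bullet> u = 1" using nu by (simp add: dot_square_norm)
  have vv: "v \<bullet> v = ?a^2" by (simp add: power2_norm_eq_inner)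
  have c0: "(?a)^2 - 1 > 0" proof -
    have "1 * 1 < ?a * ?a" using a1 by (intro mult_strict_mono) auto
    thus ?thesis by (simp add: power2_eq_square)
  qed
  have vK: "v \<in> ?K" unfolding cap_body_def using assms(2) by (simp add: hull_inc)
  have v0: "v \<noteq> 0" using a1 by auto
  have "norm v * 1 \<le> norm v * norm v" using a1 by (intro mult_left_mono) auto
  hence "norm v \<le> v \<bullet> v" using vv by (simp add: power2_eq_square)
  hence Hv: "?K \<subseteq> {x. x \<bullet> v \<le> v \<bullet> v}" using halfspace_contains[OF assms(1,2)] by simp
  have "v \<notin> interior ?K" using interior_halfspace_strict[OF Hv v0] by auto
  hence vF: "v \<in> frontier ?K" using vK closure_subset unfolding frontier_def by auto
  show ?thesis
  proof
    assume "illuminates ?K u v"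
    then obtain t where t: "t > 0" "v + t *\<^sub>R u \<in> interior ?K" unfolding illuminates_def by auto
    show "?p < - sqrt (?a^2 - 1)"
    proof (rule ccontr)
      assume "\<not> ?thesis"
      hence pc: "?p \<ge> - sqrt (?a^2 - 1)" by simp
      show False
      proof (cases "?p \<ge> 0")
        case True
        have "(v + t *\<^sub>R u) \<bullet> v < v \<bullet> v" using interior_halfspace_strict[OF Hv v0 t(2)] .
        moreover have "(v + t *\<^sub>R u) \<bullet> v = v \<bullet> v + t * ?p"
          by (simp add: inner_add_left inner_commute[of u v])
        ultimately show False using True t(1) mult_nonneg_nonneg[of t ?p] by linarith
      next
        case False
        define n where "n = v - ?p *\<^sub>R u"
        have "(- ?p)^2 \<le> (sqrt (?a^2 - 1))^2" using pc False
          by (intro power_mono) linarith+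
        hence "?p^2 \<le> (sqrt (?a^2 - 1))^2" by simp
        hence p2: "?p^2 \<le> ?a^2 - 1" using c0 by simp
        have nv: "n \<bullet> v = ?a^2 - ?p^2" unfolding n_def
          by (simp add: inner_diff_left vv inner_commute[of u v] power2_eq_square)
        have nu0: "n \<bullet> u = 0" unfolding n_def by (simp add: inner_diff_left uu)
        have nn: "n \<bullet> n = ?a^2 - ?p^2" unfolding n_def
          by (simp add: inner_diff_left inner_diff_right vv uu inner_commute[of u v] power2_eq_square)
        have ge1: "?a^2 - ?p^2 \<ge> 1" using p2 by simp
        have normn: "norm n = sqrt (?a^2 - ?p^2)" using nn by (simp add: norm_eq_sqrt_inner)
        have "sqrt (?a^2 - ?p^2) \<le> ?a^2 - ?p^2" using ge1 real_sqrt_le_iff[of "?a^2 - ?p^2" "(?a^2 - ?p^2)^2"]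
          power_increasing[of 1 2 "?a^2 - ?p^2"] by simp
        hence "norm n \<le> v \<bullet> n" using normn nv by (simp add: inner_commute)
        hence H: "?K \<subseteq> {x. x \<bullet> n \<le> v \<bullet> n}" by (rule halfspace_contains[OF assms(1,2)])
        have n0: "n \<noteq> 0" using nn ge1 by auto
        have "(v + t *\<^sub>R u) \<bullet> n < v \<bullet> n" using interior_halfspace_strict[OF H n0 t(2)] .
        moreover have "(v + t *\<^sub>R u) \<bullet> n = v \<bullet> n" using nu0
          by (simp add: inner_add_left inner_commute[of u n])
        ultimately show False by simp
      qed
    qed
  next
    assume pc: "?p < - sqrt (?a^2 - 1)"
    have "sqrt (?a^2 - 1) \<ge> 0" using c0 by simp
    hence "(sqrt (?a^2 - 1))^2 < (- ?p)^2" using pc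
      by (intro power_strict_mono) linarith+
    hence "(sqrt (?a^2 - 1))^2 < ?p^2" by simp
    hence p2: "?a^2 - 1 < ?p^2" using c0 by simp
    define t where "t = - ?p"
    have tp: "t > 0" unfolding t_def using pc \<open>sqrt (?a^2 - 1) \<ge> 0\<close> by linarith
    have "(v + t *\<^sub>R u) \<bullet> (v + t *\<^sub>R u) = ?a^2 - ?p^2" unfolding t_def
      by (simp add: inner_add_left inner_add_right inner_diff_left inner_diff_right vv uu inner_commute[of u v] power2_eq_square)
    hence "norm (v + t *\<^sub>R u)^2 < 1" using p2 by (simp add: power2_norm_eq_inner)
    hence "norm (v + t *\<^sub>R u) < 1" using power_less_imp_less_base[of "norm (v + t *\<^sub>R u)" 2 1] by simp
    hence inb: "v + t *\<^sub>R u \<in> ball 0 1" by simp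
    have "ball (0::'a) 1 \<subseteq> ?K" unfolding cap_body_def
      using ball_subset_cball cball_sub_hull hull_mono[of "sphere 0 1" "sphere 0 1 \<union> V"] by blast
    hence "ball (0::'a) 1 \<subseteq> interior ?K" by (simp add: interior_maximal)
    thus "illuminates ?K u v" unfolding illuminates_def using vF tp inb by blast
  qed
qed

end
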